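(* Let a game belong to the class $\mathcal P$ with parameters $w$ and $\gamma>0$, $w>-(I-1)\gamma$, and set $p=\gamma/(w+\gamma I)$. If $0<\varepsilon<\bar\varepsilon$ then for every information tree $\mathcal T$, $$\max_{\sigma\in\mathcal E(\mathcal T)}\mathbb P_{\mathcal T}[a_i=1\ \forall i\mid\sigma]=\begin{cases}1&\text{if }p\le q_1,\\ \rho(1-\varepsilon)^I&\text{if }q_1<p\le q_2,\\ 0&\text{if }p>q_2,\end{cases}$$ where $q_1=\rho\varepsilon/(1-\rho(1-\varepsilon))$ and $q_2=(1-\varepsilon)^{I-1}$.
   Context: Model. Fix an integer $I\ge2$, agents $\mathcal I=\{1,\dots,I\}$, a prior $\rho\in(0,1)$ and a loss probability $\varepsilon\in(0,1)$. A state of nature $\theta\in\{g,b\}$ has $\Pr(\theta=g)=\rho$. A forest on $\mathcal I$ is a collection of vertex-disjoint undirected trees whose vertex sets partition $\mathcal I$; a seeding chooses exactly one vertex (seed) of each tree. The pair $\mathcal T$ (forest, seeding) is an information tree: orient each tree away from its seed and add a root $0$ (the planner) with an arc from $0$ to each seed. If $\theta=b$ no messages are sent. If $\theta=g$ the planner sends a message along each arc from $0$, and every agent who receives a message forwards it along every arc leaving her. Each transmission is lost independently with probability $\varepsilon$. Agent $i$ observes only $x_i\in\{y,n\}$ (received / not); $\mathbb P_{\mathcal T}$ is the induced probability. $\bar\varepsilon$ is the unique $\varepsilon\in(0,1)$ with $q_1=q_2$. Class $\mathcal P$: symmetric $I$-player games in which each $i$ chooses $a_i\in\{0,1\}$,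 payoffs $u^\theta_i(a_i,\mathbf a_{-i})$ depend on $\theta$, $a_i$ and $\sum_{j\ne i}a_j$, and for each $\theta$ there is a potential $v^\theta$ with $u^\theta_i(a_i,\mathbf a_{-i})-u^\theta_i(a_i',\mathbf a_{-i})=v^\theta(a_i,\mathbf a_{-i})-v^\theta(a_i',\mathbf a_{-i})$ for all $i,a_i,a_i',\mathbf a_{-i}$, where $v^g(\mathbf a)=w$ if $\sum_ja_j=I$, $v^g(\mathbf a)=-\gamma\sum_ja_j$ if $\sum_ja_j<I$, and $v^b(\mathbf a)=-\gamma\sum_ja_j$. Each agent chooses $a_i$ knowing only $x_i$; $\mathcal E(\mathcal T)$ is the set of (mixed) Bayesian Nash equilibria. *)

theory Defs
  imports Main Complex_Main
begin

text \<open>Agents are 1..I; node 0 is the planner. An information tree (forest plus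
seeding, oriented away from the seeds, with the root 0 attached to every seed)
is encoded by its parent function: par i is the tail of the unique arc entering
agent i (par i = 0 iff i is a seed). Acyclicity: every agent reaches 0.\<close>

definition info_tree :: "nat \<Rightarrow> (nat \<Rightarrow> nat) \<Rightarrow> bool" where
  "info_tree I par \<longleftrightarrow> (\<forall>i\<in>{1..I}. par i \<le> I \<and> (\<exists>n. (par ^^ n) i = 0))"

text \<open>Agents on the path from the planner to i (including i); the arc entering
agent j is identified with j.\<close>
definition path_agents :: "(nat \<Rightarrow> nat) \<Rightarrow> nat \<Rightarrow> nat set" where
  "path_agents par i = {(par ^^ k) i | k. \<forall>m\<le>k. (par ^^ m) i \<noteq> 0}"

text \<open>State: theta (True = g, False = b) and the set S of arcs (identified with
their head agents) whose transmission is not lost.\<close>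
definition received :: "(nat \<Rightarrow> nat) \<Rightarrow> bool \<Rightarrow> nat set \<Rightarrow> nat \<Rightarrow> bool" where
  "received par th S i \<longleftrightarrow> th \<and> path_agents par i \<subseteq> S"

definition state_prob :: "nat \<Rightarrow> real \<Rightarrow> real \<Rightarrow> bool \<Rightarrow> nat set \<Rightarrow> real" where
  "state_prob I \<rho> \<epsilon> th S =
     (if th then \<rho> else 1 - \<rho>) * (1 - \<epsilon>) ^ card S * \<epsilon> ^ (I - card S)"

text \<open>Mixed strategy profile: sigma j x = probability that agent j plays 1
after observing x (True = y received, False = n).
Action profiles are represented by the set T of agents playing 1.\<close>
definition act_prob :: "nat \<Rightarrow> (nat \<Rightarrow> bool \<Rightarrow> real) \<Rightarrow> (nat \<Rightarrow> bool) \<Rightarrow> nat set \<Rightarrow> real" where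
  "act_prob I \<sigma> x T = (\<Prod>j\<in>{1..I}. if j \<in> T then \<sigma> j (x j) else 1 - \<sigma> j (x j))"

text \<open>Symmetric payoff u th a k: state th, own action a (True = 1), k = number of
other agents playing 1.\<close>
definition exp_payoff ::
  "nat \<Rightarrow> real \<Rightarrow> real \<Rightarrow> (nat \<Rightarrow> nat) \<Rightarrow> (bool \<Rightarrow> bool \<Rightarrow> nat \<Rightarrow> real)
   \<Rightarrow> (nat \<Rightarrow> bool \<Rightarrow> real) \<Rightarrow> nat \<Rightarrow> real" where
  "exp_payoff I \<rho> \<epsilon> par u \<sigma> i =
     (\<Sum>th\<in>(UNIV::bool set). \<Sum>S\<in>Pow {1..I}. state_prob I \<rho> \<epsilon> th S *
        (\<Sum>T\<in>Pow {1..I}. act_prob I \<sigma> (received par th S) T * u th (i \<in> T) (card (T - {i}))))"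

definition mixed_profile :: "nat \<Rightarrow> (nat \<Rightarrow> bool \<Rightarrow> real) \<Rightarrow> bool" where
  "mixed_profile I \<sigma> \<longleftrightarrow> (\<forall>j\<in>{1..I}. \<forall>x. 0 \<le> \<sigma> j x \<and> \<sigma> j x \<le> 1)"

definition BNE ::
  "nat \<Rightarrow> real \<Rightarrow> real \<Rightarrow> (nat \<Rightarrow> nat) \<Rightarrow> (bool \<Rightarrow> bool \<Rightarrow> nat \<Rightarrow> real)
   \<Rightarrow> (nat \<Rightarrow> bool \<Rightarrow> real) \<Rightarrow> bool" where
  "BNE I \<rho> \<epsilon> par u \<sigma> \<longleftrightarrow> mixed_profile I \<sigma> \<and>
     (\<forall>i\<in>{1..I}. \<forall>\<tau>. (\<forall>x. 0 \<le> \<tau> x \<and> \<tau> x \<le> 1) \<longrightarrow>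
        exp_payoff I \<rho> \<epsilon> par u (\<sigma>(i := \<tau>)) i \<le> exp_payoff I \<rho> \<epsilon> par u \<sigma> i)"

definition coord_prob ::
  "nat \<Rightarrow> real \<Rightarrow> real \<Rightarrow> (nat \<Rightarrow> nat) \<Rightarrow> (nat \<Rightarrow> bool \<Rightarrow> real) \<Rightarrow> real" where
  "coord_prob I \<rho> \<epsilon> par \<sigma> =
     (\<Sum>th\<in>(UNIV::bool set). \<Sum>S\<in>Pow {1..I}. state_prob I \<rho> \<epsilon> th S *
        (\<Prod>j\<in>{1..I}. \<sigma> j (received par th S j)))"

definition potP :: "nat \<Rightarrow> real \<Rightarrow> real \<Rightarrow> bool \<Rightarrow> nat set \<Rightarrow> real" where
  "potP I w \<gamma> th T = (if th \<and> card T = I then w else - \<gamma> * real (card T))"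

definition set_act :: "nat \<Rightarrow> bool \<Rightarrow> nat set \<Rightarrow> nat set" where
  "set_act i b T = (if b then insert i T else T - {i})"

definition in_class_P :: "nat \<Rightarrow> real \<Rightarrow> real \<Rightarrow> (bool \<Rightarrow> bool \<Rightarrow> nat \<Rightarrow> real) \<Rightarrow> bool" where
  "in_class_P I w \<gamma> u \<longleftrightarrow>
     (\<forall>th. \<forall>i\<in>{1..I}. \<forall>T. T \<subseteq> {1..I} \<longrightarrow> (\<forall>b c.
        u th b (card (T - {i})) - u th c (card (T - {i}))
          = potP I w \<gamma> th (set_act i b T) - potP I w \<gamma> th (set_act i c T)))"

definition q1 :: "real \<Rightarrow> real \<Rightarrow> real" where
  "q1 \<rho> \<epsilon> = \<rho> * \<epsilon> / (1 - \<rho> * (1 - \<epsilon>))"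

definition q2 :: "nat \<Rightarrow> real \<Rightarrow> real" where
  "q2 I \<epsilon> = (1 - \<epsilon>) ^ (I - 1)"

definition epsbar :: "nat \<Rightarrow> real \<Rightarrow> real" where
  "epsbar I \<rho> = (THE e. 0 < e \<and> e < 1 \<and> q1 \<rho> e = q2 I e)"

end

theory Submission
  imports Defs
begin


lemma base_sum:
  fixes a b :: real
  assumes "finite U" "P \<subseteq> U"
  shows "(\<Sum>S\<in>Pow U. if P \<subseteq> S then a ^ card S * b ^ card (U - S) else 0)
         = a ^ card P * (a + b) ^ card (U - P)"
proof -
  have "(\<Prod>x\<in>U. a + (if x \<in> P then 0 else b)) =
        (\<Sum>X\<in>Pow U. (\<Prod>x\<in>X. a) * (\<Prod>x\<in>U-X. if x \<in> P then 0 else b))"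
    by (rule prod_add) fact
  also have "\<dots> = (\<Sum>S\<in>Pow U. if P \<subseteq> S then a ^ card S * b ^ card (U - S) else 0)"
  proof (rule sum.cong)
    fix X assume X: "X \<in> Pow U"
    show "(\<Prod>x\<in>X. a) * (\<Prod>x\<in>U-X. if x \<in> P then 0 else b) =
          (if P \<subseteq> X then a ^ card X * b ^ card (U - X) else 0)"
    proof (cases "P \<subseteq> X")
      case True
      then have "(\<Prod>x\<in>U-X. if x \<in> P then 0 else b) = (\<Prod>x\<in>U-X. b)"
        by (intro prod.cong) auto
      then show ?thesis using True by simp
    next
      case False
      then obtain y where y: "y \<in> P" "y \<notin> X" by auto
      have "y \<in> U - X" using y assms by auto
      then have "(\<Prod>x\<in>U-X. if x \<in> P then 0 else b) = 0"
        using assms y by (intro prod_zero) auto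
      then show ?thesis using False by simp
    qed
  qed simp
  finally have 1: "(\<Prod>x\<in>U. a + (if x \<in> P then 0 else b)) = (\<Sum>S\<in>Pow U. if P \<subseteq> S then a ^ card S * b ^ card (U - S) else 0)" .
  have "(\<Prod>x\<in>U. a + (if x \<in> P then 0 else b)) = (\<Prod>x\<in>P. a) * (\<Prod>x\<in>U-P. a + b)"
  proof -
    have "(\<Prod>x\<in>U. a + (if x \<in> P then 0 else b)) = (\<Prod>x\<in>P. a + (if x \<in> P then 0 else b)) * (\<Prod>x\<in>U-P. a + (if x \<in> P then 0 else b))"
      using prod.subset_diff[OF assms(2) assms(1)] by (simp only: mult.commute)
    also have "\<dots> = (\<Prod>x\<in>P. a) * (\<Prod>x\<in>U-P. a + b)"
      by (intro arg_cong2[where f="(*)"] prod.cong) auto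
    finally show ?thesis .
  qed
  also have "\<dots> = a ^ card P * (a + b) ^ card (U - P)" by (simp only: prod_constant)
  finally show ?thesis using 1 by (metis)
qed

definition EE :: "nat \<Rightarrow> real \<Rightarrow> real \<Rightarrow> (bool \<Rightarrow> nat set \<Rightarrow> real) \<Rightarrow> real" where
  "EE I \<rho> \<epsilon> F = (\<Sum>th\<in>(UNIV::bool set). \<Sum>S\<in>Pow {1..I}. state_prob I \<rho> \<epsilon> th S * F th S)"

lemma sp_S:
  fixes \<epsilon> :: real
  assumes "P \<subseteq> {1..I}"
  shows "(\<Sum>S\<in>Pow {1..I}. if P \<subseteq> S then (1-\<epsilon>) ^ card S * \<epsilon> ^ (I - card S) else 0) = (1-\<epsilon>) ^ card P"
proof -
  have "(\<Sum>S\<in>Pow {1..I}. if P \<subseteq> S then (1-\<epsilon>) ^ card S * \<epsilon> ^ (I - card S) else 0)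
     = (\<Sum>S\<in>Pow {1..I}. if P \<subseteq> S then (1-\<epsilon>) ^ card S * \<epsilon> ^ card ({1..I} - S) else 0)"
    by (intro sum.cong refl) (auto simp: card_Diff_subset finite_subset)
  also have "\<dots> = (1-\<epsilon>) ^ card P" using base_sum[OF _ assms, of "1-\<epsilon>" \<epsilon>] by simp
  finally show ?thesis .
qed

lemma Ex_ind:
  assumes "P \<subseteq> {1..I}"
  shows "EE I \<rho> \<epsilon> (\<lambda>th S. if th \<and> P \<subseteq> S then 1 else 0) = \<rho> * (1-\<epsilon>) ^ card P"
proof -
  have "EE I \<rho> \<epsilon> (\<lambda>th S. if th \<and> P \<subseteq> S then 1 else 0) =
     (\<Sum>S\<in>Pow {1..I}. state_prob I \<rho> \<epsilon> True S * (if P \<subseteq> S then 1 else 0))"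
    unfolding EE_def UNIV_bool by simp
  also have "\<dots> = (\<Sum>S\<in>Pow {1..I}. \<rho> * (if P \<subseteq> S then (1-\<epsilon>) ^ card S * \<epsilon> ^ (I - card S) else 0))"
    by (intro sum.cong) (auto simp: state_prob_def)
  also have "\<dots> = \<rho> * (\<Sum>S\<in>Pow {1..I}. if P \<subseteq> S then (1-\<epsilon>) ^ card S * \<epsilon> ^ (I - card S) else 0)"
    by (simp add: sum_distrib_left)
  finally show ?thesis using sp_S[OF assms] by simp
qed

lemma Ex_one: "EE I \<rho> \<epsilon> (\<lambda>th S. 1) = 1"
proof -
  define X where "X = (\<Sum>S\<in>Pow {1..I}. (1-\<epsilon>) ^ card S * \<epsilon> ^ (I - card S))"
  have X: "X = 1" using sp_S[of "{}" I \<epsilon>] by (simp add: X_def)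
  have "EE I \<rho> \<epsilon> (\<lambda>th S. 1) = (\<Sum>S\<in>Pow {1..I}. state_prob I \<rho> \<epsilon> False S) + (\<Sum>S\<in>Pow {1..I}. state_prob I \<rho> \<epsilon> True S)"
    unfolding EE_def UNIV_bool by simp
  also have "\<dots> = (1 - \<rho>) * X + \<rho> * X"
    unfolding X_def state_prob_def sum_distrib_left by (simp add: mult.assoc)
  finally show ?thesis using X by simp
qed

lemma Ex_lin: "EE I \<rho> \<epsilon> (\<lambda>th S. c * F th S + d * G th S) = c * EE I \<rho> \<epsilon> F + d * EE I \<rho> \<epsilon> G"
  unfolding EE_def by (simp add: sum.distrib sum_distrib_left algebra_simps)

lemma sp_nonneg: "0 \<le> \<rho> \<Longrightarrow> \<rho> \<le> 1 \<Longrightarrow> 0 \<le> \<epsilon> \<Longrightarrow> \<epsilon> \<le> 1 \<Longrightarrow> 0 \<le> state_prob I \<rho> \<epsilon> th S"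
  unfolding state_prob_def by auto

lemma Ex_mono:
  assumes "0 \<le> \<rho>" "\<rho> \<le> 1" "0 \<le> \<epsilon>" "\<epsilon> \<le> 1"
    and "\<And>th S. S \<subseteq> {1..I} \<Longrightarrow> F th S \<le> G th S"
  shows "EE I \<rho> \<epsilon> F \<le> EE I \<rho> \<epsilon> G"
  unfolding EE_def
  by (intro sum_mono mult_left_mono sp_nonneg assms) auto


definition actp :: "nat set \<Rightarrow> (nat \<Rightarrow> bool \<Rightarrow> real) \<Rightarrow> (nat \<Rightarrow> bool) \<Rightarrow> nat set \<Rightarrow> real" where
  "actp A \<sigma> x T = (\<Prod>j\<in>A. if j \<in> T then \<sigma> j (x j) else 1 - \<sigma> j (x j))"

lemma actp_sum_one:
  assumes "finite A"
  shows "(\<Sum>T\<in>Pow A. actp A \<sigma> x T) = 1"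
proof -
  have "(\<Prod>j\<in>A. \<sigma> j (x j) + (1 - \<sigma> j (x j))) =
        (\<Sum>X\<in>Pow A. (\<Prod>j\<in>X. \<sigma> j (x j)) * (\<Prod>j\<in>A-X. 1 - \<sigma> j (x j)))"
    by (rule prod_add) fact
  also have "\<dots> = (\<Sum>T\<in>Pow A. actp A \<sigma> x T)"
  proof (rule sum.cong)
    fix X assume "X \<in> Pow A"
    then have X: "X \<subseteq> A" by auto
    have "actp A \<sigma> x X = (\<Prod>j\<in>A \<inter> {j. j \<in> X}. \<sigma> j (x j)) * (\<Prod>j\<in>A \<inter> - {j. j \<in> X}. 1 - \<sigma> j (x j))"
      unfolding actp_def by (rule prod.If_cases) fact
    also have "A \<inter> {j. j \<in> X} = X" using X by auto
    also have "A \<inter> - {j. j \<in> X} = A - X" by auto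
    finally show "(\<Prod>j\<in>X. \<sigma> j (x j)) * (\<Prod>j\<in>A-X. 1 - \<sigma> j (x j)) = actp A \<sigma> x X" by simp
  qed simp
  finally show ?thesis by simp
qed

lemma potP_diff:
  assumes i: "i \<in> {1..I}" and T: "T \<subseteq> {1..I} - {i}"
  shows "potP I w \<gamma> th (insert i T) - potP I w \<gamma> th T =
         - \<gamma> + (if th \<and> T = {1..I} - {i} then w + \<gamma> * real I else 0)"
proof -
  have fin: "finite T" using T finite_subset by blast
  have iT: "i \<notin> T" using T by auto
  have cU: "card ({1..I} - {i}) = I - 1" using i by simp
  have ci: "card (insert i T) = card T + 1" using fin iT by simp
  have cT: "card T \<le> I - 1" using card_mono[OF _ T] cU by simp
  have I1: "I \<ge> 1" using i by simp
  show ?thesis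
  proof (cases "th \<and> T = {1..I} - {i}")
    case True
    then have th: th and c1: "card T = I - 1" using cU by auto
    have c2: "card (insert i T) = I" using ci c1 I1 by simp
    have c3: "card T \<noteq> I" using c1 I1 by simp
    have p1: "potP I w \<gamma> th (insert i T) = w" unfolding potP_def using th c2 by simp
    have p2: "potP I w \<gamma> th T = - \<gamma> * real (I - 1)" unfolding potP_def using c1 c3 by simp
    show ?thesis unfolding p1 p2 using True I1 by (simp add: of_nat_diff algebra_simps)
  next
    case False
    have "th \<Longrightarrow> card T \<noteq> I - 1"
    proof
      assume th: th and c: "card T = I - 1"
      have "T = {1..I} - {i}" using card_subset_eq[OF _ T] c cU by simp
      then show False using False th by simp
    qed
    then have "th \<Longrightarrow> card (insert i T) \<noteq> I" using ci cT I1 by linarith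
    moreover have "card T \<noteq> I" using cT I1 by linarith
    ultimately show ?thesis using False ci unfolding potP_def by (auto simp: algebra_simps)
  qed
qed

definition Kf where
  "Kf I u \<sigma> x th i = (\<Sum>T\<in>Pow ({1..I} - {i}). actp ({1..I} - {i}) \<sigma> x T * u th False (card T))"

lemma inner_decomp:
  assumes cl: "in_class_P I w \<gamma> u" and i: "i \<in> {1..I}"
  shows "(\<Sum>T\<in>Pow {1..I}. act_prob I \<sigma> x T * u th (i \<in> T) (card (T - {i}))) =
         Kf I u \<sigma> x th i + \<sigma> i (x i) *
           (- \<gamma> + (if th then (w + \<gamma> * real I) * (\<Prod>j\<in>{1..I} - {i}. \<sigma> j (x j)) else 0))"
proof -
  define V where "V = {1..I} - {i}"
  define s where "s = \<sigma> i (x i)"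
  have U: "{1..I} = insert i V" using i V_def by auto
  have iV: "i \<notin> V" and finV: "finite V" using V_def by auto
  have PowU: "Pow {1..I} = Pow V \<union> insert i ` Pow V" using U Pow_insert by simp
  have disj: "Pow V \<inter> insert i ` Pow V = {}" using iV by auto
  have inj: "inj_on (insert i) (Pow V)" unfolding inj_on_def
  proof (intro ballI impI)
    fix A B assume "A \<in> Pow V" "B \<in> Pow V" "insert i A = insert i B"
    then show "A = B" using iV insert_ident[of i A B] by auto
  qed
  define f where "f T = act_prob I \<sigma> x T * u th (i \<in> T) (card (T - {i}))" for T
  have "(\<Sum>T\<in>Pow {1..I}. f T) = (\<Sum>T\<in>Pow V. f T) + (\<Sum>T\<in>insert i ` Pow V. f T)"
    unfolding PowU using finV disj by (intro sum.union_disjoint) auto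
  also have "(\<Sum>T\<in>insert i ` Pow V. f T) = (\<Sum>T\<in>Pow V. f (insert i T))"
    using sum.reindex[OF inj] by simp
  also have "(\<Sum>T\<in>Pow V. f T) = (\<Sum>T\<in>Pow V. (1 - s) * (actp V \<sigma> x T * u th False (card T)))"
  proof (rule sum.cong)
    fix T assume "T \<in> Pow V"
    then have T: "T \<subseteq> V" by auto
    have iT: "i \<notin> T" using T iV by auto
    have "act_prob I \<sigma> x T = (1 - s) * (\<Prod>j\<in>V. if j \<in> T then \<sigma> j (x j) else 1 - \<sigma> j (x j))"
      unfolding act_prob_def U using finV iV s_def iT by (simp add: prod.insert)
    then have "act_prob I \<sigma> x T = (1 - s) * actp V \<sigma> x T" unfolding actp_def .
    moreover have "T - {i} = T" using T iV by auto
    moreover have "i \<notin> T" using T iV by auto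
    ultimately show "f T = (1 - s) * (actp V \<sigma> x T * u th False (card T))" unfolding f_def by simp
  qed simp
  also have "(\<Sum>T\<in>Pow V. f (insert i T)) = (\<Sum>T\<in>Pow V. s * (actp V \<sigma> x T * u th True (card T)))"
  proof (rule sum.cong)
    fix T assume "T \<in> Pow V"
    then have T: "T \<subseteq> V" by auto
    have "act_prob I \<sigma> x (insert i T) = s * (\<Prod>j\<in>V. if j \<in> insert i T then \<sigma> j (x j) else 1 - \<sigma> j (x j))"
      unfolding act_prob_def U using finV iV s_def by (simp add: prod.insert)
    also have "(\<Prod>j\<in>V. if j \<in> insert i T then \<sigma> j (x j) else 1 - \<sigma> j (x j)) = actp V \<sigma> x T"
      unfolding actp_def using iV by (intro prod.cong) auto
    finally have 1: "act_prob I \<sigma> x (insert i T) = s * actp V \<sigma> x T" .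
    have "insert i T - {i} = T" using T iV by auto
    then show "f (insert i T) = s * (actp V \<sigma> x T * u th True (card T))" unfolding f_def 1 by simp
  qed simp
  finally have 1: "(\<Sum>T\<in>Pow {1..I}. f T) =
      (\<Sum>T\<in>Pow V. actp V \<sigma> x T * u th False (card T)) +
      s * (\<Sum>T\<in>Pow V. actp V \<sigma> x T * (u th True (card T) - u th False (card T)))"
    by (simp add: sum_distrib_left sum_subtractf algebra_simps)
  have 2: "(\<Sum>T\<in>Pow V. actp V \<sigma> x T * (u th True (card T) - u th False (card T))) =
      (\<Sum>T\<in>Pow V. actp V \<sigma> x T * (- \<gamma>) + (if T = V then (if th then (w + \<gamma> * real I) * actp V \<sigma> x V else 0) else 0))"
  proof (rule sum.cong)
    fix T assume "T \<in> Pow V"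
    then have T: "T \<subseteq> V" by auto
    have TU: "T \<subseteq> {1..I}" using T V_def by auto
    have "u th True (card (T - {i})) - u th False (card (T - {i})) =
          potP I w \<gamma> th (set_act i True T) - potP I w \<gamma> th (set_act i False T)"
      using cl i TU unfolding in_class_P_def by blast
    moreover have "T - {i} = T" using T iV by auto
    ultimately have "u th True (card T) - u th False (card T) = potP I w \<gamma> th (insert i T) - potP I w \<gamma> th T"
      unfolding set_act_def by simp
    also have "\<dots> = - \<gamma> + (if th \<and> T = V then w + \<gamma> * real I else 0)"
      using potP_diff[OF i, of T w \<gamma> th] T V_def by simp
    finally have eq: "u th True (card T) - u th False (card T) = - \<gamma> + (if th \<and> T = V then w + \<gamma> * real I else 0)" .
    show "actp V \<sigma> x T * (u th True (card T) - u th False (card T)) =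
       actp V \<sigma> x T * (- \<gamma>) + (if T = V then (if th then (w + \<gamma> * real I) * actp V \<sigma> x V else 0) else 0)"
      unfolding eq by (cases "T = V") (auto simp: algebra_simps)
  qed simp
  also have "\<dots> = (\<Sum>T\<in>Pow V. actp V \<sigma> x T) * (- \<gamma>) + (\<Sum>T\<in>Pow V. if T = V then (if th then (w + \<gamma> * real I) * actp V \<sigma> x V else 0) else 0)"
    unfolding sum.distrib sum_distrib_right ..
  also have "\<dots> = - \<gamma> + (if th then (w + \<gamma> * real I) * actp V \<sigma> x V else 0)"
    using actp_sum_one[OF finV, of \<sigma> x] finV by (simp only: sum.delta' Pow_iff subset_refl if_True finite_Pow_iff) simp
  also have "actp V \<sigma> x V = (\<Prod>j\<in>V. \<sigma> j (x j))" unfolding actp_def by simp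
  finally show ?thesis using 1 unfolding f_def Kf_def V_def s_def by simp
qed


definition Et where
  "Et I w \<gamma> par \<sigma> i th S = - \<gamma> + (if th then (w + \<gamma> * real I) * (\<Prod>j\<in>{1..I} - {i}. \<sigma> j (received par th S j)) else 0)"

definition Gf where
  "Gf I \<rho> \<epsilon> w \<gamma> par \<sigma> i b = EE I \<rho> \<epsilon> (\<lambda>th S. if received par th S i = b then Et I w \<gamma> par \<sigma> i th S else 0)"

lemma exp_decomp:
  assumes cl: "in_class_P I w \<gamma> u" and i: "i \<in> {1..I}"
  shows "exp_payoff I \<rho> \<epsilon> par u \<sigma> i = EE I \<rho> \<epsilon> (\<lambda>th S. Kf I u \<sigma> (received par th S) th i +
           \<sigma> i (received par th S i) * Et I w \<gamma> par \<sigma> i th S)"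
  unfolding exp_payoff_def EE_def Et_def using inner_decomp[OF cl i] by simp

lemma Kf_upd: "Kf I u (\<sigma>(i := \<tau>)) x th i = Kf I u \<sigma> x th i"
  unfolding Kf_def actp_def by (intro sum.cong refl arg_cong2[where f="(*)"] prod.cong) auto

lemma Et_upd: "Et I w \<gamma> par (\<sigma>(i := \<tau>)) i th S = Et I w \<gamma> par \<sigma> i th S"
proof -
  have "(\<Prod>j\<in>{1..I} - {i}. (\<sigma>(i := \<tau>)) j (received par th S j)) = (\<Prod>j\<in>{1..I} - {i}. \<sigma> j (received par th S j))"
    by (intro prod.cong) auto
  then show ?thesis unfolding Et_def by simp
qed

lemma Ex_cong: "(\<And>th S. F th S = G th S) \<Longrightarrow> EE I \<rho> \<epsilon> F = EE I \<rho> \<epsilon> G"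
  by (simp add: EE_def)

lemma dev:
  assumes cl: "in_class_P I w \<gamma> u" and i: "i \<in> {1..I}"
  shows "exp_payoff I \<rho> \<epsilon> par u (\<sigma>(i := \<tau>)) i - exp_payoff I \<rho> \<epsilon> par u \<sigma> i =
         (\<tau> True - \<sigma> i True) * Gf I \<rho> \<epsilon> w \<gamma> par \<sigma> i True + (\<tau> False - \<sigma> i False) * Gf I \<rho> \<epsilon> w \<gamma> par \<sigma> i False"
proof -
  define K where "K th S = Kf I u \<sigma> (received par th S) th i" for th S
  define E where "E th S = Et I w \<gamma> par \<sigma> i th S" for th S
  have a: "exp_payoff I \<rho> \<epsilon> par u (\<sigma>(i := \<tau>)) i = EE I \<rho> \<epsilon> (\<lambda>th S. K th S + \<tau> (received par th S i) * E th S)"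
    unfolding exp_decomp[OF cl i] K_def E_def Kf_upd Et_upd by simp
  have b: "exp_payoff I \<rho> \<epsilon> par u \<sigma> i = EE I \<rho> \<epsilon> (\<lambda>th S. K th S + \<sigma> i (received par th S i) * E th S)"
    unfolding exp_decomp[OF cl i] K_def E_def by simp
  have "EE I \<rho> \<epsilon> (\<lambda>th S. K th S + \<tau> (received par th S i) * E th S) - EE I \<rho> \<epsilon> (\<lambda>th S. K th S + \<sigma> i (received par th S i) * E th S)
     = EE I \<rho> \<epsilon> (\<lambda>th S. 1 * (K th S + \<tau> (received par th S i) * E th S) + (-1) * (K th S + \<sigma> i (received par th S i) * E th S))"
    unfolding Ex_lin by simp
  also have "\<dots> = EE I \<rho> \<epsilon> (\<lambda>th S. (\<tau> True - \<sigma> i True) * (if received par th S i = True then E th S else 0) +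
                       (\<tau> False - \<sigma> i False) * (if received par th S i = False then E th S else 0))"
  proof (intro Ex_cong)
    fix th S show "1 * (K th S + \<tau> (received par th S i) * E th S) + (-1) * (K th S + \<sigma> i (received par th S i) * E th S) =
      (\<tau> True - \<sigma> i True) * (if received par th S i = True then E th S else 0) +
                       (\<tau> False - \<sigma> i False) * (if received par th S i = False then E th S else 0)"
      by (cases "received par th S i") (auto simp: algebra_simps)
  qed
  also have "\<dots> = (\<tau> True - \<sigma> i True) * Gf I \<rho> \<epsilon> w \<gamma> par \<sigma> i True + (\<tau> False - \<sigma> i False) * Gf I \<rho> \<epsilon> w \<gamma> par \<sigma> i False"
    unfolding Ex_lin Gf_def E_def ..
  finally show ?thesis using a b by simp
qed

lemma BNE_zero:
  assumes cl: "in_class_P I w \<gamma> u" and i: "i \<in> {1..I}" and bne: "BNE I \<rho> \<epsilon> par u \<sigma>"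
    and neg: "Gf I \<rho> \<epsilon> w \<gamma> par \<sigma> i b < 0"
  shows "\<sigma> i b = 0"
proof -
  define \<tau> where "\<tau> = (\<sigma> i)(b := 0)"
  have mp: "\<forall>x. 0 \<le> \<sigma> i x \<and> \<sigma> i x \<le> 1" using bne i unfolding BNE_def mixed_profile_def by blast
  have t: "\<forall>x. 0 \<le> \<tau> x \<and> \<tau> x \<le> 1" using mp unfolding \<tau>_def by auto
  have "exp_payoff I \<rho> \<epsilon> par u (\<sigma>(i := \<tau>)) i \<le> exp_payoff I \<rho> \<epsilon> par u \<sigma> i"
    using bne i t unfolding BNE_def by blast
  then have "(\<tau> True - \<sigma> i True) * Gf I \<rho> \<epsilon> w \<gamma> par \<sigma> i True + (\<tau> False - \<sigma> i False) * Gf I \<rho> \<epsilon> w \<gamma> par \<sigma> i False \<le> 0"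
    using dev[OF cl i, of \<rho> \<epsilon> par \<sigma> \<tau>] by simp
  then have "- \<sigma> i b * Gf I \<rho> \<epsilon> w \<gamma> par \<sigma> i b \<le> 0"
    unfolding \<tau>_def by (cases b) auto
  then have "\<sigma> i b \<le> 0" using neg by (auto simp: zero_le_mult_iff)
  then show ?thesis using mp by (meson order.antisym)
qed

lemma BNE_intro:
  assumes cl: "in_class_P I w \<gamma> u" and mp: "mixed_profile I \<sigma>"
    and h: "\<And>i b. i \<in> {1..I} \<Longrightarrow> (\<sigma> i b = 1 \<and> Gf I \<rho> \<epsilon> w \<gamma> par \<sigma> i b \<ge> 0) \<or> (\<sigma> i b = 0 \<and> Gf I \<rho> \<epsilon> w \<gamma> par \<sigma> i b \<le> 0)"
  shows "BNE I \<rho> \<epsilon> par u \<sigma>"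
  unfolding BNE_def
proof (intro conjI mp ballI allI impI)
  fix i \<tau> assume i: "i \<in> {1..I}" and t: "\<forall>x. 0 \<le> \<tau> (x::bool) \<and> \<tau> x \<le> (1::real)"
  have "(\<tau> b - \<sigma> i b) * Gf I \<rho> \<epsilon> w \<gamma> par \<sigma> i b \<le> 0" for b
    using h[OF i, of b] t[rule_format, of b] by (auto simp: mult_le_0_iff)
  then have "(\<tau> True - \<sigma> i True) * Gf I \<rho> \<epsilon> w \<gamma> par \<sigma> i True + (\<tau> False - \<sigma> i False) * Gf I \<rho> \<epsilon> w \<gamma> par \<sigma> i False \<le> 0"
    by (meson add_nonpos_nonpos)
  then show "exp_payoff I \<rho> \<epsilon> par u (\<sigma>(i := \<tau>)) i \<le> exp_payoff I \<rho> \<epsilon> par u \<sigma> i"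
    using dev[OF cl i, of \<rho> \<epsilon> par \<sigma> \<tau>] by simp
qed


lemma chain_in:
  assumes tr: "info_tree I par" and i: "i \<in> {1..I}"
  shows "(\<forall>m\<le>k. (par ^^ m) i \<noteq> 0) \<Longrightarrow> (par ^^ k) i \<in> {1..I}"
proof (induction k)
  case 0
  then show ?case using i by simp
next
  case (Suc k)
  then have "(par ^^ k) i \<in> {1..I}" by simp
  then have "par ((par ^^ k) i) \<le> I" using tr unfolding info_tree_def by blast
  moreover have "par ((par ^^ k) i) \<noteq> 0" using Suc.prems by (metis funpow.simps(2) o_apply order_refl)
  ultimately show ?case by simp
qed

lemma path_sub:
  assumes tr: "info_tree I par" and i: "i \<in> {1..I}"
  shows "path_agents par i \<subseteq> {1..I}"
  using chain_in[OF tr i] unfolding path_agents_def by blast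

lemma path_self: "i \<in> {1..I} \<Longrightarrow> i \<in> path_agents par i"
  unfolding path_agents_def by (rule CollectI, rule exI[of _ 0]) auto

lemma recv_in: "j \<in> {1..I} \<Longrightarrow> received par th S j \<Longrightarrow> th \<and> j \<in> S"
  unfolding received_def using path_self by blast

lemma Ex_lin3: "EE I \<rho> \<epsilon> (\<lambda>th S. c1 * F1 th S + c2 * F2 th S + c3 * F3 th S) =
   c1 * EE I \<rho> \<epsilon> F1 + c2 * EE I \<rho> \<epsilon> F2 + c3 * EE I \<rho> \<epsilon> F3"
  unfolding EE_def by (simp add: sum.distrib sum_distrib_left algebra_simps)

abbreviation ind where "ind P \<equiv> (\<lambda>th S. if th \<and> P \<subseteq> S then (1::real) else 0)"

lemma Ex_ind_empty: "EE I \<rho> \<epsilon> (ind {}) = \<rho>"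
  using Ex_ind[of "{}" I \<rho> \<epsilon>] by simp

lemma Ex_zero: "EE I \<rho> \<epsilon> (\<lambda>th S. 0) = 0"
  unfolding EE_def by simp

lemma Gf_le:
  assumes prm: "0 \<le> \<rho>" "\<rho> \<le> 1" "0 \<le> \<epsilon>" "\<epsilon> \<le> 1" and c: "0 \<le> w + \<gamma> * real I"
    and bd: "\<And>th S. S \<subseteq> {1..I} \<Longrightarrow> received par th S i = b \<Longrightarrow> th \<Longrightarrow>
              (\<Prod>j\<in>{1..I} - {i}. \<sigma> j (received par th S j)) \<le> B th S"
  shows "Gf I \<rho> \<epsilon> w \<gamma> par \<sigma> i b \<le> EE I \<rho> \<epsilon> (\<lambda>th S. if received par th S i = b then
            - \<gamma> + (if th then (w + \<gamma> * real I) * B th S else 0) else 0)"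
  unfolding Gf_def Et_def
proof (intro Ex_mono prm)
  fix th S assume S: "S \<subseteq> {1..I}"
  show "(if received par th S i = b then - \<gamma> + (if th then (w + \<gamma> * real I) * (\<Prod>j\<in>{1..I} - {i}. \<sigma> j (received par th S j)) else 0) else 0)
     \<le> (if received par th S i = b then - \<gamma> + (if th then (w + \<gamma> * real I) * B th S else 0) else 0)"
  proof (cases "received par th S i = b \<and> th")
    case True
    then show ?thesis using mult_left_mono[OF bd[OF S] c] by auto
  qed auto
qed

lemma Gf_ge:
  assumes prm: "0 \<le> \<rho>" "\<rho> \<le> 1" "0 \<le> \<epsilon>" "\<epsilon> \<le> 1" and c: "0 \<le> w + \<gamma> * real I"
    and bd: "\<And>th S. S \<subseteq> {1..I} \<Longrightarrow> received par th S i = b \<Longrightarrow> th \<Longrightarrow>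
              B th S \<le> (\<Prod>j\<in>{1..I} - {i}. \<sigma> j (received par th S j))"
  shows "EE I \<rho> \<epsilon> (\<lambda>th S. if received par th S i = b then
            - \<gamma> + (if th then (w + \<gamma> * real I) * B th S else 0) else 0) \<le> Gf I \<rho> \<epsilon> w \<gamma> par \<sigma> i b"
  unfolding Gf_def Et_def
proof (intro Ex_mono prm)
  fix th S assume S: "S \<subseteq> {1..I}"
  show "(if received par th S i = b then - \<gamma> + (if th then (w + \<gamma> * real I) * B th S else 0) else 0) \<le>
    (if received par th S i = b then - \<gamma> + (if th then (w + \<gamma> * real I) * (\<Prod>j\<in>{1..I} - {i}. \<sigma> j (received par th S j)) else 0) else 0)"
  proof (cases "received par th S i = b \<and> th")
    case True
    then show ?thesis using mult_left_mono[OF bd[OF S] c] by auto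
  qed auto
qed

lemma prod_le_ind:
  fixes \<sigma> :: "nat \<Rightarrow> bool \<Rightarrow> real"
  assumes tr: "info_tree I par" and i: "i \<in> {1..I}"
    and mp: "\<And>j x. j \<in> {1..I} \<Longrightarrow> 0 \<le> \<sigma> j x \<and> \<sigma> j x \<le> 1"
    and Q: "Q \<subseteq> {1..I} - {i}"
    and z: "\<And>j. j \<in> Q \<Longrightarrow> \<sigma> j False = 0"
  shows "(\<Prod>j\<in>{1..I} - {i}. \<sigma> j (received par th S j)) \<le> (if Q \<subseteq> S then 1 else 0)"
proof (cases "Q \<subseteq> S")
  case True
  have "(\<Prod>j\<in>{1..I} - {i}. \<sigma> j (received par th S j)) \<le> 1"
  proof (rule prod_le_1)
    fix j assume "j \<in> {1..I} - {i}"
    then show "0 \<le> \<sigma> j (received par th S j) \<and> \<sigma> j (received par th S j) \<le> 1" using mp by auto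
  qed
  then show ?thesis using True by simp
next
  case False
  then obtain j where j: "j \<in> Q" "j \<notin> S" by auto
  then have "\<not> received par th S j" using recv_in[of j I par th S] Q by auto
  then have "\<sigma> j (received par th S j) = 0" using z[OF j(1)] by simp
  then have p0: "(\<Prod>j\<in>{1..I} - {i}. \<sigma> j (received par th S j)) = 0"
    using j Q by (intro prod_zero) auto
  show ?thesis unfolding p0 using False by simp
qed


lemma ExT_gen:
  assumes tr: "info_tree I par" and i: "i \<in> {1..I}" and R: "R \<subseteq> {1..I}"
  shows "EE I \<rho> \<epsilon> (\<lambda>th S. if received par th S i = True then - \<gamma> + (if th then c * (if R \<subseteq> S then 1 else 0) else 0) else 0)
     = - \<gamma> * \<rho> * (1-\<epsilon>) ^ card (path_agents par i) + c * \<rho> * (1-\<epsilon>) ^ card (path_agents par i \<union> R)"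
proof -
  define P where "P = path_agents par i"
  have P: "P \<subseteq> {1..I}" using path_sub[OF tr i] P_def by simp
  have "EE I \<rho> \<epsilon> (\<lambda>th S. if received par th S i = True then - \<gamma> + (if th then c * (if R \<subseteq> S then 1 else 0) else 0) else 0)
      = EE I \<rho> \<epsilon> (\<lambda>th S. (- \<gamma>) * ind P th S + c * ind (P \<union> R) th S + 0 * ind {} th S)"
    by (intro Ex_cong) (auto simp: received_def P_def)
  also have "\<dots> = - \<gamma> * \<rho> * (1-\<epsilon>) ^ card P + c * \<rho> * (1-\<epsilon>) ^ card (P \<union> R)"
    unfolding Ex_lin3 using Ex_ind[OF P] Ex_ind[of "P \<union> R"] P R by simp
  finally show ?thesis unfolding P_def .
qed

lemma ExF_gen:
  assumes tr: "info_tree I par" and i: "i \<in> {1..I}" and R: "R \<subseteq> path_agents par i"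
  shows "EE I \<rho> \<epsilon> (\<lambda>th S. if received par th S i = False then - \<gamma> + (if th then c * (if R \<subseteq> S then 1 else 0) else 0) else 0)
     = - \<gamma> + (\<gamma> - c) * \<rho> * (1-\<epsilon>) ^ card (path_agents par i) + c * \<rho> * (1-\<epsilon>) ^ card R"
proof -
  define P where "P = path_agents par i"
  have P: "P \<subseteq> {1..I}" using path_sub[OF tr i] P_def by simp
  have R': "R \<subseteq> {1..I}" using R P P_def by auto
  have "EE I \<rho> \<epsilon> (\<lambda>th S. if received par th S i = False then - \<gamma> + (if th then c * (if R \<subseteq> S then 1 else 0) else 0) else 0)
      = EE I \<rho> \<epsilon> (\<lambda>th S. (- \<gamma>) * 1 + (\<gamma> - c) * ind P th S + c * ind R th S)"
    using R by (intro Ex_cong) (auto simp: received_def P_def)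
  also have "\<dots> = - \<gamma> + (\<gamma> - c) * \<rho> * (1-\<epsilon>) ^ card P + c * \<rho> * (1-\<epsilon>) ^ card R"
    unfolding Ex_lin3 using Ex_ind[OF P] Ex_ind[OF R'] Ex_one by simp
  finally show ?thesis unfolding P_def .
qed

lemma card_path:
  assumes tr: "info_tree I par" and i: "i \<in> {1..I}"
  shows "card (path_agents par i - {i}) = card (path_agents par i) - 1"
    and "card (path_agents par i) \<ge> 1"
    and "card (path_agents par i) \<le> I"
proof -
  have f: "finite (path_agents par i)" using path_sub[OF tr i] finite_subset by blast
  show "card (path_agents par i - {i}) = card (path_agents par i) - 1"
    using path_self[OF i] f by simp
  show "card (path_agents par i) \<ge> 1" using path_self[OF i, of par] f
    by (metis One_nat_def Suc_leI card_gt_0_iff empty_iff)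
  show "card (path_agents par i) \<le> I" using card_mono[OF _ path_sub[OF tr i]] by simp
qed



lemma arA1:
  fixes a c \<gamma> \<rho> x :: real
  assumes h: "c*\<rho>*(1-a) < \<gamma>*(1-\<rho>*a)" and x: "0 < x" "x \<le> 1" and g: "0 < \<gamma>" and r: "0 \<le> \<rho>" and a: "0 \<le> a"
  shows "- \<gamma> + (\<gamma> - c) * \<rho> * (a * x) + c * \<rho> * x < 0"
proof -
  have 1: "c*\<rho>*(1-a)*x < \<gamma>*(1-\<rho>*a)*x" using h x by (intro mult_strict_right_mono) auto
  have 2: "\<gamma>*x \<le> \<gamma>" using x g by simp
  have e1: "c*\<rho>*(1-a)*x = c*\<rho>*x - c*\<rho>*(a*x)" by (simp add: algebra_simps)
  have e2: "\<gamma>*(1-\<rho>*a)*x = \<gamma>*x - \<gamma>*\<rho>*(a*x)" by (simp add: algebra_simps)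
  have e3: "(\<gamma> - c) * \<rho> * (a * x) = \<gamma>*\<rho>*(a*x) - c*\<rho>*(a*x)" by (simp add: algebra_simps)
  show ?thesis using 1 2 e1 e2 e3 by linarith
qed

lemma arA2:
  fixes a c \<gamma> \<rho> :: real and I :: nat
  assumes h: "c * a^(I-1) < \<gamma>" and I: "I \<ge> 1" and r: "0 < \<rho>" and a: "0 < a"
  shows "- \<gamma> * \<rho> * a ^ 1 + c * \<rho> * a ^ I < 0"
proof -
  have e: "a ^ I = a * a^(I-1)" using I by (metis One_nat_def Suc_pred' less_eq_Suc_le power_Suc)
  have "(\<rho>*a) * (c * a^(I-1)) < (\<rho>*a) * \<gamma>" using h r a by (intro mult_strict_left_mono) auto
  then show ?thesis unfolding e by (simp add: algebra_simps)
qed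

lemma arA3:
  fixes a c \<gamma> \<rho> :: real and I d :: nat
  assumes h: "\<gamma> \<le> c * a^(I-1)" and I: "I \<ge> 1" and d: "d \<ge> 1" and r: "0 < \<rho>" and a: "0 < a" "a \<le> 1" and g: "0 < \<gamma>"
  shows "0 \<le> - \<gamma> * \<rho> * a ^ d + c * \<rho> * a ^ I"
proof -
  have e: "a ^ I = a * a^(I-1)" using I by (metis One_nat_def Suc_pred' less_eq_Suc_le power_Suc)
  have ad: "a ^ d \<le> a" using power_decreasing[OF d, of a] a by simp
  have "\<gamma> * \<rho> * a ^ d \<le> \<gamma> * \<rho> * a" using ad g r by simp
  also have "(\<rho>*a) * \<gamma> \<le> (\<rho>*a) * (c * a^(I-1))" using h r a by (intro mult_left_mono) auto
  then have "\<gamma> * \<rho> * a \<le> c * \<rho> * a ^ I" unfolding e by (simp add: algebra_simps)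
  finally show ?thesis by simp
qed

lemma arA5:
  fixes a c \<gamma> \<rho> y :: real
  assumes h: "\<gamma>*(1-\<rho>*a) \<le> c*\<rho>*(1-a)" and y: "0 \<le> y" "y \<le> a" and a: "a < 1" and r: "0 \<le> \<rho>" "\<rho> \<le> 1" and g: "0 < \<gamma>"
  shows "0 \<le> - \<gamma> + (\<gamma> - c) * \<rho> * y + c * \<rho> * 1"
proof -
  have 1: "(1-\<rho>*y)*(1-a) \<le> (1-\<rho>*a)*(1-y)"
  proof -
    have "0 \<le> (a - y) * (1 - \<rho>)" using y r by simp
    then show ?thesis by (simp add: algebra_simps)
  qed
  have "\<gamma>*((1-\<rho>*y)*(1-a)) \<le> \<gamma>*((1-\<rho>*a)*(1-y))" using 1 g by simp
  also have "\<gamma>*((1-\<rho>*a)*(1-y)) \<le> c*\<rho>*(1-a)*(1-y)"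
    using mult_right_mono[OF h, of "1-y"] y a by (simp add: algebra_simps)
  finally have "(\<gamma>*(1-\<rho>*y))*(1-a) \<le> (c*\<rho>*(1-y))*(1-a)" by (simp add: algebra_simps)
  then have "\<gamma>*(1-\<rho>*y) \<le> c*\<rho>*(1-y)" using a by simp
  then show ?thesis by (simp add: algebra_simps)
qed

lemma den_pos:
  fixes \<rho> e :: real
  assumes "0 < \<rho>" "\<rho> < 1" "0 \<le> e" "e \<le> 1"
  shows "0 < 1 - \<rho> * (1 - e)"
proof -
  have "\<rho> * (1 - e) \<le> \<rho>" using assms by (intro mult_left_le) auto
  then show ?thesis using assms by linarith
qed

lemma q1_strict:
  assumes r: "0 < \<rho>" "\<rho> < 1" and e: "0 \<le> e1" "e1 < e2" "e2 \<le> 1"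
  shows "q1 \<rho> e1 < q1 \<rho> e2"
proof -
  define d1 where "d1 = 1 - \<rho> * (1 - e1)"
  define d2 where "d2 = 1 - \<rho> * (1 - e2)"
  have d1: "0 < d1" unfolding d1_def using r e by (intro den_pos) auto
  have d2: "0 < d2" unfolding d2_def using r e by (intro den_pos) auto
  have k: "\<rho> * e1 * d2 < \<rho> * e2 * d1"
  proof -
    have "\<rho> * (1-\<rho>) * e1 < \<rho> * (1-\<rho>) * e2" using r e by simp
    then show ?thesis unfolding d1_def d2_def by (simp add: algebra_simps)
  qed
  have "\<rho> * e1 / d1 = (\<rho> * e1 * d2) / (d1 * d2)" using d2 by simp
  also have "\<dots> < (\<rho> * e2 * d1) / (d1 * d2)" using k d1 d2 by (intro divide_strict_right_mono) auto
  also have "\<dots> = \<rho> * e2 / d2" using d1 by simp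
  finally show ?thesis unfolding q1_def d1_def d2_def .
qed

lemma q2_anti:
  assumes "e1 \<le> e2" "e2 \<le> 1"
  shows "q2 I e2 \<le> q2 I e1"
  unfolding q2_def using assms by (intro power_mono) auto

lemma q1_lt_q2:
  assumes I: "I \<ge> 2" and r: "0 < \<rho>" "\<rho> < 1" and e: "0 < \<epsilon>" "\<epsilon> < 1" and eb: "\<epsilon> < epsbar I \<rho>"
  shows "q1 \<rho> \<epsilon> < q2 I \<epsilon>"
proof -
  define f where "f e = q1 \<rho> e - q2 I e" for e
  have f0: "f 0 \<le> 0" unfolding f_def q1_def q2_def by simp
  have z: "q2 I 1 = 0" unfolding q2_def using I by (simp add: power_0_left)
  have f1: "0 \<le> f 1" unfolding f_def z unfolding q1_def using I r by simp
  have cont: "\<forall>x. 0 \<le> x \<and> x \<le> 1 \<longrightarrow> isCont f x"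
  proof (intro allI impI)
    fix x :: real assume x: "0 \<le> x \<and> x \<le> 1"
    have "0 < 1 - \<rho> * (1 - x)" using r x by (intro den_pos) auto
    then show "isCont f x" unfolding f_def q1_def q2_def by (intro continuous_intros) auto
  qed
  obtain e0 where e0: "0 \<le> e0" "e0 \<le> 1" "f e0 = 0" using IVT[of f 0 0 1] f0 f1 cont by auto
  have mono: "f x < f y" if "0 \<le> x" "x < y" "y \<le> 1" for x y
    using q1_strict[OF r, of x y] q2_anti[of x y I] that unfolding f_def by simp
  have "e0 \<noteq> 0"
  proof
    assume "e0 = 0"
    then have "f e0 = -1" unfolding f_def q1_def q2_def by simp
    then show False using e0 by simp
  qed
  moreover have "e0 \<noteq> 1"
  proof
    assume e1: "e0 = 1"
    have "f e0 = \<rho>" unfolding f_def e1 z unfolding q1_def by simp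
    then show False using e0 r by simp
  qed
  ultimately have e0': "0 < e0" "e0 < 1" using e0 by auto
  have "epsbar I \<rho> = e0"
    unfolding epsbar_def
  proof (rule the_equality)
    show "0 < e0 \<and> e0 < 1 \<and> q1 \<rho> e0 = q2 I e0" using e0' e0 unfolding f_def by simp
  next
    fix e assume "0 < e \<and> e < 1 \<and> q1 \<rho> e = q2 I e"
    then have "f e = 0" "0 < e" "e < 1" unfolding f_def by auto
    then show "e = e0" using mono[of e e0] mono[of e0 e] e0 e0' by (metis linorder_neqE_linordered_idom less_le not_less)
  qed
  then have "f \<epsilon> < f e0" using mono[of \<epsilon> e0] e eb e0' by simp
  then show ?thesis using e0 unfolding f_def by simp
qed



lemma seed_exists:
  assumes tr: "info_tree I par" and I: "I \<ge> 1"
  shows "\<exists>s\<in>{1..I}. path_agents par s = {s}"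
proof -
  have one: "(1::nat) \<in> {1..I}" using I by simp
  then obtain n where n: "(par ^^ n) 1 = 0" using tr unfolding info_tree_def by blast
  define n0 where "n0 = (LEAST n. (par ^^ n) (1::nat) = 0)"
  have n0: "(par ^^ n0) 1 = 0" unfolding n0_def by (rule LeastI[of _ n]) (rule n)
  have lt: "\<And>m. m < n0 \<Longrightarrow> (par ^^ m) 1 \<noteq> 0" unfolding n0_def by (rule not_less_Least)
  have nz: "n0 \<noteq> 0" using n0 by (metis funpow_0 one_neq_zero)
  define s where "s = (par ^^ (n0 - 1)) 1"
  have sU: "s \<in> {1..I}" unfolding s_def
    by (rule chain_in[OF tr one]) (use lt nz in auto)
  have ps: "par s = 0" using n0 nz unfolding s_def
    by (metis Suc_pred' funpow.simps(2) o_apply not_gr_zero)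
  have "path_agents par s = {s}" unfolding path_agents_def
  proof (intro equalityI subsetI)
    fix x assume "x \<in> {(par ^^ k) s |k. \<forall>m\<le>k. (par ^^ m) s \<noteq> 0}"
    then obtain k where x: "x = (par ^^ k) s" "\<forall>m\<le>k. (par ^^ m) s \<noteq> 0" by blast
    have "k = 0"
    proof (rule ccontr)
      assume k: "k \<noteq> 0"
      have "(par ^^ 1) s \<noteq> 0" using x(2)[rule_format, of 1] k by simp
      then show False using ps by simp
    qed
    then show "x \<in> {s}" using x by simp
  next
    fix x assume "x \<in> {s}"
    then show "x \<in> {(par ^^ k) s |k. \<forall>m\<le>k. (par ^^ m) s \<noteq> 0}"
      using sU by (auto intro!: exI[of _ 0])
  qed
  then show ?thesis using sU by blast
qed

lemma GF_neg:
  assumes tr: "info_tree I par" and i: "i \<in> {1..I}"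
    and prm: "0 < \<rho>" "\<rho> < 1" "0 < \<epsilon>" "\<epsilon> < 1" and g: "0 < \<gamma>" and c: "0 \<le> w + \<gamma> * real I"
    and mp: "\<And>j x. j \<in> {1..I} \<Longrightarrow> 0 \<le> \<sigma> j x \<and> \<sigma> j x \<le> (1::real)"
    and z: "\<And>j. j \<in> path_agents par i - {i} \<Longrightarrow> \<sigma> j False = 0"
    and h: "(w + \<gamma> * real I) * \<rho> * (1 - (1-\<epsilon>)) < \<gamma> * (1 - \<rho> * (1-\<epsilon>))"
  shows "Gf I \<rho> \<epsilon> w \<gamma> par \<sigma> i False < 0"
proof -
  define P where "P = path_agents par i"
  define Q where "Q = P - {i}"
  define d where "d = card P"
  define c where "c = w + \<gamma> * real I"
  have PU: "P \<subseteq> {1..I}" using path_sub[OF tr i] P_def by simp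
  have Q: "Q \<subseteq> {1..I} - {i}" using PU Q_def by auto
  have "Gf I \<rho> \<epsilon> w \<gamma> par \<sigma> i False \<le> EE I \<rho> \<epsilon> (\<lambda>th S. if received par th S i = False then
            - \<gamma> + (if th then (w + \<gamma> * real I) * (if Q \<subseteq> S then 1 else 0) else 0) else 0)"
    using prm c by (intro Gf_le prod_le_ind[OF tr i mp Q]) (auto simp: z Q_def P_def)
  also have "\<dots> = - \<gamma> + (\<gamma> - c) * \<rho> * (1-\<epsilon>) ^ d + c * \<rho> * (1-\<epsilon>) ^ card Q"
    using ExF_gen[OF tr i, of Q] unfolding Q_def P_def d_def c_def by auto
  also have "\<dots> < 0"
  proof -
    have d1: "d \<ge> 1" and cQ: "card Q = d - 1" using card_path[OF tr i] unfolding d_def Q_def P_def by auto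
    have e: "(1-\<epsilon>) ^ d = (1-\<epsilon>) * (1-\<epsilon>) ^ (d - 1)" using d1
      by (metis One_nat_def Suc_pred' less_eq_Suc_le power_Suc)
    have "- \<gamma> + (\<gamma> - c) * \<rho> * ((1-\<epsilon>) * (1-\<epsilon>) ^ (d - 1)) + c * \<rho> * (1-\<epsilon>) ^ (d - 1) < 0"
      using prm g h unfolding c_def by (intro arA1) (auto intro: power_le_one)
    then show ?thesis unfolding cQ e .
  qed
  finally show ?thesis .
qed

lemma allF_zero:
  assumes cl: "in_class_P I w \<gamma> u" and tr: "info_tree I par" and bne: "BNE I \<rho> \<epsilon> par u \<sigma>"
    and prm: "0 < \<rho>" "\<rho> < 1" "0 < \<epsilon>" "\<epsilon> < 1" and g: "0 < \<gamma>" and c: "0 \<le> w + \<gamma> * real I"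
    and h: "(w + \<gamma> * real I) * \<rho> * (1 - (1-\<epsilon>)) < \<gamma> * (1 - \<rho> * (1-\<epsilon>))"
  shows "\<forall>i\<in>{1..I}. \<sigma> i False = 0"
proof -
  have mp: "\<And>j x. j \<in> {1..I} \<Longrightarrow> 0 \<le> \<sigma> j x \<and> \<sigma> j x \<le> 1"
    using bne unfolding BNE_def mixed_profile_def by blast
  have key: "\<forall>i\<in>{1..I}. (par ^^ n) i = 0 \<longrightarrow> \<sigma> i False = 0" for n
  proof (induction n rule: less_induct)
    case (less n)
    show ?case
    proof (intro ballI impI)
      fix i assume i: "i \<in> {1..I}" and n: "(par ^^ n) i = 0"
      have z: "\<sigma> j False = 0" if jQ: "j \<in> path_agents par i - {i}" for j
      proof -
        obtain k where j: "j = (par ^^ k) i" "\<forall>m\<le>k. (par ^^ m) i \<noteq> 0" "j \<noteq> i"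
          using jQ unfolding path_agents_def by blast
        have k0: "k \<noteq> 0"
        proof
          assume "k = 0"
          then show False using j by simp
        qed
        have kn: "k < n"
        proof (rule ccontr)
          assume "\<not> k < n"
          then have "(par ^^ n) i \<noteq> 0" using j(2) by simp
          with n show False by simp
        qed
        have "(par ^^ (n - k)) j = (par ^^ (n - k + k)) i" unfolding j(1) funpow_add by simp
        also have "n - k + k = n" using kn by simp
        finally have jn: "(par ^^ (n - k)) j = 0" using n by simp
        have jU: "j \<in> {1..I}" using chain_in[OF tr i j(2)] j(1) by simp
        have "n - k < n" using k0 kn by simp
        then show ?thesis using less.IH jn jU by blast
      qed
      have "Gf I \<rho> \<epsilon> w \<gamma> par \<sigma> i False < 0"
        by (rule GF_neg[where \<sigma>=\<sigma>, OF tr i prm g c mp z h])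
      then show "\<sigma> i False = 0" by (rule BNE_zero[OF cl i bne])
    qed
  qed
  show ?thesis using key tr unfolding info_tree_def by blast
qed



lemma coord_Ex: "coord_prob I \<rho> \<epsilon> par \<sigma> = EE I \<rho> \<epsilon> (\<lambda>th S. \<Prod>j\<in>{1..I}. \<sigma> j (received par th S j))"
  unfolding coord_prob_def EE_def by simp

lemma coord_le_one:
  assumes prm: "0 < \<rho>" "\<rho> < 1" "0 < \<epsilon>" "\<epsilon> < 1"
    and mp: "\<And>j x. j \<in> {1..I} \<Longrightarrow> 0 \<le> \<sigma> j x \<and> \<sigma> j x \<le> (1::real)"
  shows "coord_prob I \<rho> \<epsilon> par \<sigma> \<le> 1"
proof -
  have "coord_prob I \<rho> \<epsilon> par \<sigma> \<le> EE I \<rho> \<epsilon> (\<lambda>th S. 1)"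
    unfolding coord_Ex
  proof (rule Ex_mono)
    fix th S
    show "(\<Prod>j\<in>{1..I}. \<sigma> j (received par th S j)) \<le> 1"
    proof (rule prod_le_1)
      fix j assume "j \<in> {1..I}"
      then show "0 \<le> \<sigma> j (received par th S j) \<and> \<sigma> j (received par th S j) \<le> 1" using mp by auto
    qed
  qed (use prm in auto)
  then show ?thesis using Ex_one by simp
qed

lemma coord_le_ind:
  assumes prm: "0 < \<rho>" "\<rho> < 1" "0 < \<epsilon>" "\<epsilon> < 1" and I: "I \<ge> 1"
    and mp: "\<And>j x. j \<in> {1..I} \<Longrightarrow> 0 \<le> \<sigma> j x \<and> \<sigma> j x \<le> (1::real)"
    and z: "\<And>j. j \<in> {1..I} \<Longrightarrow> \<sigma> j False = 0"
  shows "coord_prob I \<rho> \<epsilon> par \<sigma> \<le> \<rho> * (1-\<epsilon>) ^ I"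
proof -
  have "coord_prob I \<rho> \<epsilon> par \<sigma> \<le> EE I \<rho> \<epsilon> (ind {1..I})"
    unfolding coord_Ex
  proof (rule Ex_mono)
    fix th S
    show "(\<Prod>j\<in>{1..I}. \<sigma> j (received par th S j)) \<le> ind {1..I} th S"
    proof (cases "th \<and> {1..I} \<subseteq> S")
      case True
      have "(\<Prod>j\<in>{1..I}. \<sigma> j (received par th S j)) \<le> 1"
      proof (rule prod_le_1)
        fix j assume "j \<in> {1..I}"
        then show "0 \<le> \<sigma> j (received par th S j) \<and> \<sigma> j (received par th S j) \<le> 1" using mp by auto
      qed
      then show ?thesis using True by simp
    next
      case False
      note nF = this
      obtain j where j: "j \<in> {1..I}" "\<not> received par th S j"
      proof (cases th)
        case True
        then obtain j where j1: "j \<in> {1..I}" "j \<notin> S" using nF by blast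
        then show ?thesis using that[of j] recv_in[of j I par th S] by blast
      next
        case False
        then show ?thesis using that[of 1] I unfolding received_def by simp
      qed
      then have p0: "(\<Prod>j\<in>{1..I}. \<sigma> j (received par th S j)) = 0"
        using z by (intro prod_zero) (auto intro!: bexI[of _ j])
      show ?thesis unfolding p0 by simp
    qed
  qed (use prm in auto)
  then show ?thesis using Ex_ind[of "{1..I}" I \<rho> \<epsilon>] by simp
qed

lemma coord_zero:
  assumes s: "s \<in> {1..I}" and z: "\<sigma> s True = 0" "\<sigma> s False = 0"
  shows "coord_prob I \<rho> \<epsilon> par \<sigma> = 0"
proof -
  have "coord_prob I \<rho> \<epsilon> par \<sigma> = EE I \<rho> \<epsilon> (\<lambda>th S. 0)"
    unfolding coord_Ex
  proof (rule Ex_cong)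
    fix th S
    have "\<sigma> s (received par th S s) = 0" using z by (cases "received par th S s") auto
    then show "(\<Prod>j\<in>{1..I}. \<sigma> j (received par th S j)) = 0"
      using s by (intro prod_zero) auto
  qed
  then show ?thesis using Ex_zero by simp
qed

lemma GT_neg:
  assumes tr: "info_tree I par" and s: "s \<in> {1..I}" and ps: "path_agents par s = {s}" and I: "I \<ge> 1"
    and prm: "0 < \<rho>" "\<rho> < 1" "0 < \<epsilon>" "\<epsilon> < 1" and c: "0 \<le> w + \<gamma> * real I"
    and mp: "\<And>j x. j \<in> {1..I} \<Longrightarrow> 0 \<le> \<sigma> j x \<and> \<sigma> j x \<le> (1::real)"
    and z: "\<And>j. j \<in> {1..I} \<Longrightarrow> \<sigma> j False = 0"
    and h: "(w + \<gamma> * real I) * (1-\<epsilon>) ^ (I - 1) < \<gamma>"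
  shows "Gf I \<rho> \<epsilon> w \<gamma> par \<sigma> s True < 0"
proof -
  have Q: "{1..I} - {s} \<subseteq> {1..I} - {s}" by simp
  have "Gf I \<rho> \<epsilon> w \<gamma> par \<sigma> s True \<le> EE I \<rho> \<epsilon> (\<lambda>th S. if received par th S s = True then
            - \<gamma> + (if th then (w + \<gamma> * real I) * (if {1..I} - {s} \<subseteq> S then 1 else 0) else 0) else 0)"
    using prm c by (intro Gf_le prod_le_ind[OF tr s mp Q]) (auto simp: z)
  also have "\<dots> = EE I \<rho> \<epsilon> (\<lambda>th S. if received par th S s = True then
            - \<gamma> + (if th then (w + \<gamma> * real I) * (if {1..I} \<subseteq> S then 1 else 0) else 0) else 0)"
  proof (rule Ex_cong)
    fix th S
    show "(if received par th S s = True then - \<gamma> + (if th then (w + \<gamma> * real I) * (if {1..I} - {s} \<subseteq> S then 1 else 0) else 0) else 0) =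
       (if received par th S s = True then - \<gamma> + (if th then (w + \<gamma> * real I) * (if {1..I} \<subseteq> S then 1 else 0) else 0) else 0)"
      using recv_in[OF s, of par th S] by auto
  qed
  also have "\<dots> = - \<gamma> * \<rho> * (1-\<epsilon>) ^ 1 + (w + \<gamma> * real I) * \<rho> * (1-\<epsilon>) ^ I"
    using ExT_gen[OF tr s, of "{1..I}"] ps s by (simp add: insert_absorb)
  also have "\<dots> < 0" using h I prm by (intro arA2) auto
  finally show ?thesis .
qed



lemma prof_one:
  assumes cl: "in_class_P I w \<gamma> u" and tr: "info_tree I par"
    and prm: "0 < \<rho>" "\<rho> < 1" "0 < \<epsilon>" "\<epsilon> < 1" and g: "0 < \<gamma>" and c: "\<gamma> \<le> w + \<gamma> * real I"
    and h: "\<gamma> * (1 - \<rho> * (1-\<epsilon>)) \<le> (w + \<gamma> * real I) * \<rho> * (1 - (1-\<epsilon>))"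
  shows "BNE I \<rho> \<epsilon> par u (\<lambda>j x. 1) \<and> coord_prob I \<rho> \<epsilon> par (\<lambda>j x. 1) = 1"
proof
  have c0: "0 \<le> w + \<gamma> * real I" using c g by simp
  show "BNE I \<rho> \<epsilon> par u (\<lambda>j x. 1)"
  proof (rule BNE_intro[OF cl])
    show "mixed_profile I (\<lambda>j x. 1)" unfolding mixed_profile_def by simp
  next
    fix i b assume i: "i \<in> {1..I}"
    define d where "d = card (path_agents par i)"
    have d1: "d \<ge> 1" using card_path[OF tr i] d_def by simp
    have "0 \<le> Gf I \<rho> \<epsilon> w \<gamma> par (\<lambda>j x. 1) i b"
    proof (cases b)
      case True
      have "EE I \<rho> \<epsilon> (\<lambda>th S. if received par th S i = True then
            - \<gamma> + (if th then (w + \<gamma> * real I) * (if {} \<subseteq> S then 1 else 0) else 0) else 0) \<le> Gf I \<rho> \<epsilon> w \<gamma> par (\<lambda>j x. 1) i True"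
        using prm c0 by (intro Gf_ge) auto
      moreover have "EE I \<rho> \<epsilon> (\<lambda>th S. if received par th S i = True then
            - \<gamma> + (if th then (w + \<gamma> * real I) * (if {} \<subseteq> S then 1 else 0) else 0) else 0) =
            - \<gamma> * \<rho> * (1-\<epsilon>) ^ d + (w + \<gamma> * real I) * \<rho> * (1-\<epsilon>) ^ d"
        using ExT_gen[OF tr i, of "{}"] d_def by simp
      moreover have "0 \<le> - \<gamma> * \<rho> * (1-\<epsilon>) ^ d + (w + \<gamma> * real I) * \<rho> * (1-\<epsilon>) ^ d"
      proof -
        have "0 \<le> ((w + \<gamma> * real I) - \<gamma>) * (\<rho> * (1-\<epsilon>) ^ d)" using c prm by simp
        then show ?thesis by (simp add: algebra_simps)
      qed
      ultimately show ?thesis using True by simp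
    next
      case False
      have "EE I \<rho> \<epsilon> (\<lambda>th S. if received par th S i = False then
            - \<gamma> + (if th then (w + \<gamma> * real I) * (if {} \<subseteq> S then 1 else 0) else 0) else 0) \<le> Gf I \<rho> \<epsilon> w \<gamma> par (\<lambda>j x. 1) i False"
        using prm c0 by (intro Gf_ge) auto
      moreover have "EE I \<rho> \<epsilon> (\<lambda>th S. if received par th S i = False then
            - \<gamma> + (if th then (w + \<gamma> * real I) * (if {} \<subseteq> S then 1 else 0) else 0) else 0) =
            - \<gamma> + (\<gamma> - (w + \<gamma> * real I)) * \<rho> * (1-\<epsilon>) ^ d + (w + \<gamma> * real I) * \<rho> * 1"
        using ExF_gen[OF tr i, of "{}"] d_def by simp
      moreover have "0 \<le> - \<gamma> + (\<gamma> - (w + \<gamma> * real I)) * \<rho> * (1-\<epsilon>) ^ d + (w + \<gamma> * real I) * \<rho> * 1"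
      proof (rule arA5[where a="1-\<epsilon>"])
        show "(1-\<epsilon>) ^ d \<le> 1-\<epsilon>" using power_decreasing[OF d1, of "1-\<epsilon>"] prm by simp
      qed (use h prm g in auto)
      ultimately show ?thesis using False by simp
    qed
    then show "((\<lambda>j x. 1) i b = (1::real) \<and> 0 \<le> Gf I \<rho> \<epsilon> w \<gamma> par (\<lambda>j x. 1) i b) \<or>
          ((\<lambda>j x. 1) i b = (0::real) \<and> Gf I \<rho> \<epsilon> w \<gamma> par (\<lambda>j x. 1) i b \<le> 0)" by simp
  qed
  show "coord_prob I \<rho> \<epsilon> par (\<lambda>j x. 1) = 1" unfolding coord_Ex using Ex_one by simp
qed

lemma prod_recv:
  assumes tr: "info_tree I par" and I: "I \<ge> 1"
  shows "(\<Prod>j\<in>{1..I}. (if received par th S j then 1 else 0)) = ind {1..I} th S"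
proof (cases "th \<and> {1..I} \<subseteq> S")
  case True
  have "received par th S j" if "j \<in> {1..I}" for j
    using True path_sub[OF tr that] unfolding received_def by blast
  then show ?thesis using True by simp
next
  case False
  note nF = this
  obtain j where j: "j \<in> {1..I}" "\<not> received par th S j"
  proof (cases th)
    case True
    then obtain j where j1: "j \<in> {1..I}" "j \<notin> S" using nF by blast
    then show ?thesis using that[of j] recv_in[of j I par th S] by blast
  next
    case False
    then show ?thesis using that[of 1] I unfolding received_def by simp
  qed
  then have p0: "(\<Prod>j\<in>{1..I}. (if received par th S j then 1 else 0)) = (0::real)"
    by (intro prod_zero) (auto intro!: bexI[of _ j])
  show ?thesis unfolding p0 using nF by simp
qed

lemma prof_recv:
  assumes cl: "in_class_P I w \<gamma> u" and tr: "info_tree I par" and I: "I \<ge> 1"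
    and prm: "0 < \<rho>" "\<rho> < 1" "0 < \<epsilon>" "\<epsilon> < 1" and g: "0 < \<gamma>" and c: "0 \<le> w + \<gamma> * real I"
    and h1: "(w + \<gamma> * real I) * \<rho> * (1 - (1-\<epsilon>)) < \<gamma> * (1 - \<rho> * (1-\<epsilon>))"
    and h2: "\<gamma> \<le> (w + \<gamma> * real I) * (1-\<epsilon>) ^ (I - 1)"
  shows "BNE I \<rho> \<epsilon> par u (\<lambda>j x. if x then 1 else 0) \<and>
         coord_prob I \<rho> \<epsilon> par (\<lambda>j x. if x then 1 else 0) = \<rho> * (1-\<epsilon>) ^ I"
proof
  define \<sigma> :: "nat \<Rightarrow> bool \<Rightarrow> real" where "\<sigma> = (\<lambda>j x. if x then 1 else 0)"
  have mp: "\<And>j x. j \<in> {1..I} \<Longrightarrow> 0 \<le> \<sigma> j x \<and> \<sigma> j x \<le> 1" unfolding \<sigma>_def by simp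
  have "BNE I \<rho> \<epsilon> par u \<sigma>"
  proof (rule BNE_intro[OF cl])
    show "mixed_profile I \<sigma>" unfolding mixed_profile_def \<sigma>_def by simp
  next
    fix i b assume i: "i \<in> {1..I}"
    define d where "d = card (path_agents par i)"
    have d1: "d \<ge> 1" using card_path[OF tr i] d_def by simp
    show "(\<sigma> i b = 1 \<and> 0 \<le> Gf I \<rho> \<epsilon> w \<gamma> par \<sigma> i b) \<or> (\<sigma> i b = 0 \<and> Gf I \<rho> \<epsilon> w \<gamma> par \<sigma> i b \<le> 0)"
    proof (cases b)
      case True
      have "EE I \<rho> \<epsilon> (\<lambda>th S. if received par th S i = True then
            - \<gamma> + (if th then (w + \<gamma> * real I) * (if {1..I} \<subseteq> S then 1 else 0) else 0) else 0) \<le> Gf I \<rho> \<epsilon> w \<gamma> par \<sigma> i True"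
      proof (rule Gf_ge)
        fix th S assume th: th
        show "(if {1..I} \<subseteq> S then 1 else 0) \<le> (\<Prod>j\<in>{1..I} - {i}. \<sigma> j (received par th S j))"
        proof (cases "{1..I} \<subseteq> S")
          case True
          have "\<sigma> j (received par th S j) = 1" if "j \<in> {1..I} - {i}" for j
            using True th path_sub[OF tr, of j] that unfolding received_def \<sigma>_def by auto
          then show ?thesis using True by simp
        next
          case False
          have "0 \<le> (\<Prod>j\<in>{1..I} - {i}. \<sigma> j (received par th S j))"
            by (rule prod_nonneg) (simp add: \<sigma>_def)
          then show ?thesis using False by simp
        qed
      qed (use prm c in auto)
      moreover have "EE I \<rho> \<epsilon> (\<lambda>th S. if received par th S i = True then
            - \<gamma> + (if th then (w + \<gamma> * real I) * (if {1..I} \<subseteq> S then 1 else 0) else 0) else 0) =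
            - \<gamma> * \<rho> * (1-\<epsilon>) ^ d + (w + \<gamma> * real I) * \<rho> * (1-\<epsilon>) ^ I"
      proof -
        have "path_agents par i \<union> {1..I} = {1..I}" using path_sub[OF tr i] by auto
        then show ?thesis using ExT_gen[OF tr i, of "{1..I}"] d_def by simp
      qed
      moreover have "0 \<le> - \<gamma> * \<rho> * (1-\<epsilon>) ^ d + (w + \<gamma> * real I) * \<rho> * (1-\<epsilon>) ^ I"
        using h2 I d1 prm g by (intro arA3) auto
      ultimately show ?thesis using True unfolding \<sigma>_def by simp
    next
      case False
      have z: "\<And>j. j \<in> path_agents par i - {i} \<Longrightarrow> \<sigma> j False = 0" unfolding \<sigma>_def by simp
      have "Gf I \<rho> \<epsilon> w \<gamma> par \<sigma> i False < 0"
        by (rule GF_neg[where \<sigma>=\<sigma>, OF tr i prm g c mp z h1])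
      then show ?thesis using False unfolding \<sigma>_def by simp
    qed
  qed
  then show "BNE I \<rho> \<epsilon> par u (\<lambda>j x. if x then 1 else 0)" unfolding \<sigma>_def .
  have "coord_prob I \<rho> \<epsilon> par \<sigma> = EE I \<rho> \<epsilon> (ind {1..I})"
    unfolding coord_Ex \<sigma>_def by (intro Ex_cong) (rule prod_recv[OF tr I])
  then show "coord_prob I \<rho> \<epsilon> par (\<lambda>j x. if x then 1 else 0) = \<rho> * (1-\<epsilon>) ^ I"
    using Ex_ind[of "{1..I}" I \<rho> \<epsilon>] unfolding \<sigma>_def by simp
qed

lemma prof_zero:
  assumes cl: "in_class_P I w \<gamma> u" and I: "I \<ge> 2"
    and prm: "0 < \<rho>" "\<rho> < 1" "0 < \<epsilon>" "\<epsilon> < 1" and g: "0 < \<gamma>" and c: "0 \<le> w + \<gamma> * real I"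
  shows "BNE I \<rho> \<epsilon> par u (\<lambda>j x. 0) \<and> coord_prob I \<rho> \<epsilon> par (\<lambda>j x. 0) = 0"
proof
  show "BNE I \<rho> \<epsilon> par u (\<lambda>j x. 0)"
  proof (rule BNE_intro[OF cl])
    show "mixed_profile I (\<lambda>j x. 0)" unfolding mixed_profile_def by simp
  next
    fix i b assume i: "i \<in> {1..I}"
    have "(if i = 1 then 2 else 1) \<in> {1..I} - {i}" using I i by auto
    then obtain k where k: "k \<in> {1..I} - {i}" by blast
    have "Gf I \<rho> \<epsilon> w \<gamma> par (\<lambda>j x. 0) i b \<le> EE I \<rho> \<epsilon> (\<lambda>th S. if received par th S i = b then
            - \<gamma> + (if th then (w + \<gamma> * real I) * 0 else 0) else 0)"
    proof (rule Gf_le)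
      fix th S
      show "(\<Prod>j\<in>{1..I} - {i}. (0::real)) \<le> 0" using k by (subst prod_zero) auto
    qed (use prm c in auto)
    also have "\<dots> \<le> EE I \<rho> \<epsilon> (\<lambda>th S. 0)"
      by (rule Ex_mono) (use prm g in auto)
    finally show "((\<lambda>j x. 0) i b = (1::real) \<and> 0 \<le> Gf I \<rho> \<epsilon> w \<gamma> par (\<lambda>j x. 0) i b) \<or>
          ((\<lambda>j x. 0) i b = (0::real) \<and> Gf I \<rho> \<epsilon> w \<gamma> par (\<lambda>j x. 0) i b \<le> 0)" using Ex_zero by simp
  qed
  show "coord_prob I \<rho> \<epsilon> par (\<lambda>j x. 0) = 0" using I by (intro coord_zero[of 1]) auto
qed



theorem mainTheorem8:
  fixes I :: nat and \<rho> \<epsilon> w \<gamma> :: real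
    and u :: "bool \<Rightarrow> bool \<Rightarrow> nat \<Rightarrow> real" and par :: "nat \<Rightarrow> nat"
  assumes "I \<ge> 2" and "0 < \<rho>" and "\<rho> < 1" and "0 < \<epsilon>" and "\<epsilon> < 1"
    and "\<epsilon> < epsbar I \<rho>"
    and "\<gamma> > 0" and "w > - (real I - 1) * \<gamma>"
    and "in_class_P I w \<gamma> u"
    and "info_tree I par"
  shows "let p = \<gamma> / (w + \<gamma> * real I);
             c = (if p \<le> q1 \<rho> \<epsilon> then 1
                  else if p \<le> q2 I \<epsilon> then \<rho> * (1 - \<epsilon>) ^ I else 0)
         in (\<exists>\<sigma>. BNE I \<rho> \<epsilon> par u \<sigma> \<and> coord_prob I \<rho> \<epsilon> par \<sigma> = c) \<and>
            (\<forall>\<sigma>. BNE I \<rho> \<epsilon> par u \<sigma> \<longrightarrow> coord_prob I \<rho> \<epsilon> par \<sigma> \<le> c)"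
proof -
  note I = assms(1) and prm = assms(2-5) and eb = assms(6) and g = assms(7) and wg = assms(8)
    and cl = assms(9) and tr = assms(10)
  define c where "c = w + \<gamma> * real I"
  have cg: "\<gamma> < c" using wg unfolding c_def by (simp add: algebra_simps)
  have c0: "0 \<le> c" "0 < c" using cg g by auto
  have I1: "I \<ge> 1" using I by simp
  have D: "0 < 1 - \<rho> * (1 - \<epsilon>)" using prm by (intro den_pos) auto
  have q12: "q1 \<rho> \<epsilon> < q2 I \<epsilon>" using q1_lt_q2[OF I prm eb] .
  have conv1: "(\<gamma> / c \<le> q1 \<rho> \<epsilon>) \<longleftrightarrow> \<gamma> * (1 - \<rho> * (1-\<epsilon>)) \<le> c * \<rho> * (1 - (1-\<epsilon>))"
  proof -
    have "(\<gamma> / c \<le> \<rho> * \<epsilon> / (1 - \<rho> * (1 - \<epsilon>))) \<longleftrightarrow> \<gamma> \<le> \<rho> * \<epsilon> / (1 - \<rho> * (1 - \<epsilon>)) * c"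
      using c0 by (simp add: pos_divide_le_eq)
    also have "\<dots> \<longleftrightarrow> \<gamma> \<le> (\<rho> * \<epsilon> * c) / (1 - \<rho> * (1 - \<epsilon>))" by simp
    also have "\<dots> \<longleftrightarrow> \<gamma> * (1 - \<rho> * (1 - \<epsilon>)) \<le> \<rho> * \<epsilon> * c" using D by (simp add: pos_le_divide_eq)
    also have "\<rho> * \<epsilon> * c = c * \<rho> * (1 - (1-\<epsilon>))" by simp
    finally show ?thesis unfolding q1_def .
  qed
  have conv2: "(\<gamma> / c \<le> q2 I \<epsilon>) \<longleftrightarrow> \<gamma> \<le> c * (1-\<epsilon>) ^ (I - 1)"
    unfolding q2_def using c0 by (simp add: divide_le_eq algebra_simps)
  have mpB: "\<And>\<sigma> j x. BNE I \<rho> \<epsilon> par u \<sigma> \<Longrightarrow> j \<in> {1..I} \<Longrightarrow> 0 \<le> \<sigma> j x \<and> \<sigma> j x \<le> 1"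
    unfolding BNE_def mixed_profile_def by blast
  show ?thesis
  proof (cases "\<gamma> / c \<le> q1 \<rho> \<epsilon>")
    case True
    have "BNE I \<rho> \<epsilon> par u (\<lambda>j x. 1) \<and> coord_prob I \<rho> \<epsilon> par (\<lambda>j x. 1) = 1"
      using prof_one[OF cl tr prm g] cg True conv1 unfolding c_def by auto
    moreover have "\<forall>\<sigma>. BNE I \<rho> \<epsilon> par u \<sigma> \<longrightarrow> coord_prob I \<rho> \<epsilon> par \<sigma> \<le> 1"
      using coord_le_one[OF prm] mpB by blast
    ultimately show ?thesis using True unfolding Let_def c_def[symmetric] by auto
  next
    case F1: False
    have h1: "c * \<rho> * (1 - (1-\<epsilon>)) < \<gamma> * (1 - \<rho> * (1-\<epsilon>))" using F1 conv1 by simp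
    have allF: "\<And>\<sigma>. BNE I \<rho> \<epsilon> par u \<sigma> \<Longrightarrow> \<forall>i\<in>{1..I}. \<sigma> i False = 0"
      using allF_zero[OF cl tr _ prm g] c0 h1 unfolding c_def by blast
    show ?thesis
    proof (cases "\<gamma> / c \<le> q2 I \<epsilon>")
      case True
      have h2: "\<gamma> \<le> c * (1-\<epsilon>) ^ (I - 1)" using True conv2 by simp
      have "BNE I \<rho> \<epsilon> par u (\<lambda>j x. if x then 1 else 0) \<and>
         coord_prob I \<rho> \<epsilon> par (\<lambda>j x. if x then 1 else 0) = \<rho> * (1-\<epsilon>) ^ I"
        using prof_recv[OF cl tr I1 prm g] c0 h1 h2 unfolding c_def by blast
      moreover have "\<forall>\<sigma>. BNE I \<rho> \<epsilon> par u \<sigma> \<longrightarrow> coord_prob I \<rho> \<epsilon> par \<sigma> \<le> \<rho> * (1-\<epsilon>) ^ I"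
      proof (intro allI impI)
        fix \<sigma> assume b: "BNE I \<rho> \<epsilon> par u \<sigma>"
        show "coord_prob I \<rho> \<epsilon> par \<sigma> \<le> \<rho> * (1-\<epsilon>) ^ I"
          using coord_le_ind[OF prm I1, of \<sigma> par] mpB[OF b] allF[OF b] by blast
      qed
      ultimately show ?thesis using True F1 unfolding Let_def c_def[symmetric] by auto
    next
      case False
      have h2: "c * (1-\<epsilon>) ^ (I - 1) < \<gamma>" using False conv2 by simp
      obtain s where s: "s \<in> {1..I}" "path_agents par s = {s}" using seed_exists[OF tr I1] by blast
      have "BNE I \<rho> \<epsilon> par u (\<lambda>j x. 0) \<and> coord_prob I \<rho> \<epsilon> par (\<lambda>j x. 0) = 0"
        using prof_zero[OF cl I prm g] c0 unfolding c_def by blast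
      moreover have "\<forall>\<sigma>. BNE I \<rho> \<epsilon> par u \<sigma> \<longrightarrow> coord_prob I \<rho> \<epsilon> par \<sigma> \<le> 0"
      proof (intro allI impI)
        fix \<sigma> assume b: "BNE I \<rho> \<epsilon> par u \<sigma>"
        have zF: "\<And>j. j \<in> {1..I} \<Longrightarrow> \<sigma> j False = 0" using allF[OF b] by blast
        have "Gf I \<rho> \<epsilon> w \<gamma> par \<sigma> s True < 0"
          by (rule GT_neg[where \<sigma>=\<sigma>, OF tr s I1 prm _ mpB[OF b] zF]) (use c0 h2 c_def in auto)
        then have "\<sigma> s True = 0" by (rule BNE_zero[OF cl s(1) b])
        then have "coord_prob I \<rho> \<epsilon> par \<sigma> = 0" using coord_zero[OF s(1)] zF[OF s(1)] by blast
        then show "coord_prob I \<rho> \<epsilon> par \<sigma> \<le> 0" by simp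
      qed
      ultimately show ?thesis using False F1 q12 unfolding Let_def c_def[symmetric] by auto
    qed
  qed
qed

end
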